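(* Consider $N$ advertisers with click-through rates $c_i\in(0,1]$, abandonment probabilities $\gamma_i\ge0$, $\mu_i=c_i+\gamma_i\le 1$, and private values per click $v_i\ge0$, indexed so that $\frac{c_1v_1}{\mu_1}\ge\dots\ge\frac{c_Nv_N}{\mu_N}$. Let $b_{N+1}=0$ and $b_i=\frac{\mu_i}{c_i}\big[v_ic_i+(1-\mu_i)\frac{b_{i+1}c_{i+1}}{\mu_{i+1}}\big]$ for $i=N,\dots,1$. Then the search engine's expected revenue under the CE mechanism with bids $(b_1,\dots,b_N)$ equals its expected revenue under the VCG mechanism with truthful bids $b_i=v_i$ for all $i$.
   Context: Click model: users view ads top to bottom; having viewed the ad at position $k$ the user clicks it with probability $c$ of that ad, abandons with probability $\gamma$ of that ad, and otherwise moves on; so the ad at position $k$ in order $(1),\dots,(N)$ is clicked with probability $c_{(k)}\prod_{l<k}(1-\mu_{(l)})$. Search engine expected revenue is $\sum_k p_{(k)}c_{(k)}\prod_{l<k}(1-\mu_{(l)})$. CE mechanism: with $w=c/\mu$, ads are ranked in descending order of $wb$ and the ad at position $i$ pays per click $\frac{b_{i+1}c_{i+1}\mu_i}{\mu_{i+1}c_i}$, where $i+1$ is the ad immediately below (bottom ad pays $0$). VCG mechanism: ads are ranked in descending order of $\frac{b c}{\mu}$ and the ad at position $i$ pays per click $\frac{\mu_i}{c_i}\sum_{j=i+1}^{N}b_jc_j\prod_{k=i+1}^{j-1}(1-\mu_k)$ (indices referring to positions). *)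

theory Defs
  imports Main "HOL.Real"
begin

text \<open>Ads are indexed 1..N. A ranking is a list of ad indices, position k (0-based)
  holding the ad  ord ! k. Rankings are produced by a stable sort on the descending key,
  i.e. ties are broken in favour of the lower index.\<close>

definition rank_desc :: "(nat \<Rightarrow> real) \<Rightarrow> nat \<Rightarrow> nat list" where
  "rank_desc key N = sort_key (\<lambda>i. - key i) [1..<N+1]"

definition click_prob :: "nat list \<Rightarrow> (nat \<Rightarrow> real) \<Rightarrow> (nat \<Rightarrow> real) \<Rightarrow> nat \<Rightarrow> real" where
  "click_prob ord c \<mu> k = c (ord ! k) * (\<Prod>l<k. (1 - \<mu> (ord ! l)))"

definition revenue :: "nat list \<Rightarrow> (nat \<Rightarrow> real) \<Rightarrow> (nat \<Rightarrow> real) \<Rightarrow> (nat \<Rightarrow> real) \<Rightarrow> real" where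
  "revenue ord price c \<mu> = (\<Sum>k<length ord. price k * click_prob ord c \<mu> k)"

definition CE_order :: "(nat \<Rightarrow> real) \<Rightarrow> (nat \<Rightarrow> real) \<Rightarrow> (nat \<Rightarrow> real) \<Rightarrow> nat \<Rightarrow> nat list" where
  "CE_order b c \<mu> N = rank_desc (\<lambda>i. (c i / \<mu> i) * b i) N"

definition CE_price :: "nat list \<Rightarrow> (nat \<Rightarrow> real) \<Rightarrow> (nat \<Rightarrow> real) \<Rightarrow> (nat \<Rightarrow> real) \<Rightarrow> nat \<Rightarrow> real" where
  "CE_price ord b c \<mu> k =
     (if Suc k < length ord then
        b (ord ! Suc k) * c (ord ! Suc k) * \<mu> (ord ! k) / (\<mu> (ord ! Suc k) * c (ord ! k))
      else 0)"

definition CE_revenue :: "(nat \<Rightarrow> real) \<Rightarrow> (nat \<Rightarrow> real) \<Rightarrow> (nat \<Rightarrow> real) \<Rightarrow> nat \<Rightarrow> real" where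
  "CE_revenue b c \<mu> N = (let ord = CE_order b c \<mu> N in revenue ord (CE_price ord b c \<mu>) c \<mu>)"

definition VCG_order :: "(nat \<Rightarrow> real) \<Rightarrow> (nat \<Rightarrow> real) \<Rightarrow> (nat \<Rightarrow> real) \<Rightarrow> nat \<Rightarrow> nat list" where
  "VCG_order b c \<mu> N = rank_desc (\<lambda>i. b i * c i / \<mu> i) N"

definition VCG_price :: "nat list \<Rightarrow> (nat \<Rightarrow> real) \<Rightarrow> (nat \<Rightarrow> real) \<Rightarrow> (nat \<Rightarrow> real) \<Rightarrow> nat \<Rightarrow> real" where
  "VCG_price ord b c \<mu> k =
     \<mu> (ord ! k) / c (ord ! k) *
     (\<Sum>j\<in>{Suc k..<length ord}. b (ord ! j) * c (ord ! j) * (\<Prod>m\<in>{Suc k..<j}. (1 - \<mu> (ord ! m))))"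

definition VCG_revenue :: "(nat \<Rightarrow> real) \<Rightarrow> (nat \<Rightarrow> real) \<Rightarrow> (nat \<Rightarrow> real) \<Rightarrow> nat \<Rightarrow> real" where
  "VCG_revenue b c \<mu> N = (let ord = VCG_order b c \<mu> N in revenue ord (VCG_price ord b c \<mu>) c \<mu>)"

end

theory Submission
  imports Defs
begin

lemma rank_id:
  assumes "\<forall>i\<in>{1..<N}. key (Suc i) \<le> key i"
  shows "rank_desc key N = [1..<N+1]"
  unfolding rank_desc_def
proof (rule sort_key_id_if_sorted)
  show "sorted (map (\<lambda>i. - key i) [1..<N + 1])"
    unfolding sorted_iff_nth_Suc
  proof (intro allI impI)
    fix i assume "Suc i < length (map (\<lambda>i. - key i) [1..<N + 1])"
    hence "Suc i < N" by (simp del: upt_Suc)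
    hence "[1..<N + 1] ! i = Suc i" "[1..<N + 1] ! Suc i = Suc (Suc i)" by (simp_all add: nth_upt del: upt_Suc)
    thus "map (\<lambda>i. - key i) [1..<N + 1] ! i \<le> map (\<lambda>i. - key i) [1..<N + 1] ! Suc i"
      using assms \<open>Suc i < N\<close> by (simp del: upt_Suc)
  qed
qed

theorem theorem5:
  fixes N :: nat and c \<gamma> \<mu> v b :: "nat \<Rightarrow> real"
  assumes c_pos: "\<forall>i\<in>{1..N}. 0 < c i \<and> c i \<le> 1"
      and gamma_nonneg: "\<forall>i\<in>{1..N}. 0 \<le> \<gamma> i"
      and mu_def: "\<forall>i\<in>{1..N}. \<mu> i = c i + \<gamma> i"
      and mu_le1: "\<forall>i\<in>{1..N}. \<mu> i \<le> 1"
      and v_nonneg: "\<forall>i\<in>{1..N}. 0 \<le> v i"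
      and sorted: "\<forall>i\<in>{1..<N}. c (Suc i) * v (Suc i) / \<mu> (Suc i) \<le> c i * v i / \<mu> i"
      and b_last: "b (N + 1) = 0"
      and b_rec: "\<forall>i\<in>{1..N}. b i = \<mu> i / c i *
                     (v i * c i + (1 - \<mu> i) * (b (Suc i) * c (Suc i) / \<mu> (Suc i)))"
  shows "CE_revenue b c \<mu> N = VCG_revenue v c \<mu> N"
proof -
  define B where "B i = b i * c i / \<mu> i" for i
  define x where "x i = c i * v i / \<mu> i" for i
  have mupos: "0 < \<mu> i" if "i \<in> {1..N}" for i
    using c_pos gamma_nonneg mu_def that by (smt (verit))
  have BN1: "B (N+1) = 0" using b_last by (simp add: B_def)
  have Brec: "B i = \<mu> i * x i + (1 - \<mu> i) * B (Suc i)" if "i \<in> {1..N}" for i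
  proof -
    have "B i = c i / \<mu> i * (\<mu> i / c i * (v i * c i + (1 - \<mu> i) * B (Suc i)))"
      using b_rec that by (simp add: B_def)
    also have "\<dots> = v i * c i + (1 - \<mu> i) * B (Suc i)"
    proof -
      have "c i \<noteq> 0" using c_pos that by (metis less_irrefl)
      have "\<mu> i \<noteq> 0" using mupos[OF that] by auto
      note this \<open>c i \<noteq> 0\<close>
      thus ?thesis by simp
    qed
    finally show ?thesis using mupos[OF that] by (simp add: x_def)
  qed
  have xnn: "0 \<le> x i" if "i \<in> {1..N}" for i
  proof -
    have "0 < c i" "0 \<le> v i" using that c_pos v_nonneg by auto
    thus ?thesis using mupos[OF that] by (simp add: x_def)
  qed
  have Ble: "B i \<le> x i" if "i \<in> {1..N}" for i
  proof -
    have "\<forall>i. N - i = d \<longrightarrow> i \<in> {1..N} \<longrightarrow> B i \<le> x i" for d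
    proof (induction d)
      case 0
      show ?case
      proof (intro allI impI)
        fix i assume "N - i = 0" "i \<in> {1..N}"
        hence i: "i = N" by auto
        have "B i = \<mu> i * x i" using Brec[OF \<open>i \<in> {1..N}\<close>] BN1 i by simp
        also have "\<dots> \<le> 1 * x i"
          by (rule mult_right_mono) (use mu_le1 xnn \<open>i \<in> {1..N}\<close> in auto)
        finally show "B i \<le> x i" by simp
      qed
    next
      case (Suc d)
      show ?case
      proof (intro allI impI)
        fix i assume h: "N - i = Suc d" "i \<in> {1..N}"
        hence s: "Suc i \<in> {1..N}" "i \<in> {1..<N}" by auto
        have ih: "B (Suc i) \<le> x (Suc i)" using Suc.IH h s by auto
        have xs: "x (Suc i) \<le> x i" using sorted s by (simp add: x_def)
        have m: "0 \<le> 1 - \<mu> i" using mu_le1 h by auto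
        have "B i = \<mu> i * x i + (1 - \<mu> i) * B (Suc i)" using Brec h by auto
        also have "\<dots> \<le> \<mu> i * x i + (1 - \<mu> i) * x i"
          using mult_left_mono[OF order_trans[OF ih xs] m] by simp
        finally show "B i \<le> x i" by (simp add: algebra_simps)
      qed
    qed
    thus ?thesis using that by auto
  qed
  have Bdec: "B (Suc i) \<le> B i" if "i \<in> {1..<N}" for i
  proof -
    have s: "Suc i \<in> {1..N}" "i \<in> {1..N}" using that by auto
    have "x (Suc i) \<le> x i" using sorted that by (simp add: x_def)
    hence "B (Suc i) \<le> x i" using Ble[OF s(1)] by simp
    hence "\<mu> i * B (Suc i) \<le> \<mu> i * x i"
      using mupos[OF s(2)] by simp
    thus ?thesis using Brec[OF s(2)] by (simp add: algebra_simps)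
  qed
  define ord where "ord = [1..<N+1]"
  have CEo: "CE_order b c \<mu> N = ord"
    unfolding CE_order_def ord_def
    by (rule rank_id) (use Bdec in \<open>simp add: B_def mult.commute\<close>)
  have VCGo: "VCG_order v c \<mu> N = ord"
    unfolding VCG_order_def ord_def
    by (rule rank_id) (use sorted in \<open>simp add: mult.commute\<close>)
  have len: "length ord = N" by (simp add: ord_def del: upt_Suc)
  have nth: "ord ! k = Suc k" if "k < N" for k using that by (simp add: ord_def nth_upt del: upt_Suc)
  define T where "T a = (\<Sum>j\<in>{a..<N}. v (ord ! j) * c (ord ! j) * (\<Prod>m\<in>{a..<j}. (1 - \<mu> (ord ! m))))" for a
  have TB: "T a = B (Suc a)" if "a \<le> N" for a
  proof -
    have "\<forall>a. N - a = d \<longrightarrow> a \<le> N \<longrightarrow> T a = B (Suc a)" for d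
    proof (induction d)
      case 0
      then show ?case using BN1 by (auto simp: T_def)
    next
      case (Suc d)
      show ?case
      proof (intro allI impI)
        fix a assume h: "N - a = Suc d" "a \<le> N"
        hence aN: "a < N" by auto
        have ih: "T (Suc a) = B (Suc (Suc a))" using Suc.IH h by auto
        have "T a = v (ord ! a) * c (ord ! a) +
            (\<Sum>j\<in>{Suc a..<N}. v (ord ! j) * c (ord ! j) * (\<Prod>m\<in>{a..<j}. (1 - \<mu> (ord ! m))))"
          unfolding T_def using aN by (simp add: sum.atLeast_Suc_lessThan)
        also have "(\<Sum>j\<in>{Suc a..<N}. v (ord ! j) * c (ord ! j) * (\<Prod>m\<in>{a..<j}. (1 - \<mu> (ord ! m))))
            = (\<Sum>j\<in>{Suc a..<N}. (1 - \<mu> (ord ! a)) * (v (ord ! j) * c (ord ! j) * (\<Prod>m\<in>{Suc a..<j}. (1 - \<mu> (ord ! m)))))"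
          by (rule sum.cong) (auto simp: prod.atLeast_Suc_lessThan)
        also have "\<dots> = (1 - \<mu> (ord ! a)) * T (Suc a)"
          by (simp add: T_def sum_distrib_left)
        finally have "T a = \<mu> (Suc a) * x (Suc a) + (1 - \<mu> (Suc a)) * B (Suc (Suc a))"
          using ih nth[OF aN] mupos[of "Suc a"] aN by (simp add: x_def)
        thus "T a = B (Suc a)" using Brec[of "Suc a"] aN by simp
      qed
    qed
    thus ?thesis using that by auto
  qed
  have price: "CE_price ord b c \<mu> k = VCG_price ord v c \<mu> k" if "k < N" for k
  proof -
    have V: "VCG_price ord v c \<mu> k = \<mu> (Suc k) / c (Suc k) * B (Suc (Suc k))"
      using TB[of "Suc k"] that nth[OF that] by (simp add: VCG_price_def len T_def)
    show ?thesis
    proof (cases "Suc k < N")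
      case True
      have "CE_price ord b c \<mu> k = b (Suc (Suc k)) * c (Suc (Suc k)) * \<mu> (Suc k) / (\<mu> (Suc (Suc k)) * c (Suc k))"
        using True nth[OF that] nth[OF True] by (simp add: CE_price_def len)
      also have "\<dots> = \<mu> (Suc k) / c (Suc k) * B (Suc (Suc k))"
        by (simp add: B_def mult_ac)
      finally show ?thesis using V by simp
    next
      case False
      hence "Suc k = N" using that by simp
      thus ?thesis using V BN1 by (simp add: CE_price_def len)
    qed
  qed
  show ?thesis
    unfolding CE_revenue_def VCG_revenue_def Let_def CEo VCGo revenue_def
    using price len by (intro sum.cong) auto
qed

end
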